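(* Let $A=C(X)$ be the commutative unital C*-algebra of continuous functions on a compact Hausdorff space $X$. For any finitely generated Hilbert $A$-module $\mathcal H$ and any standard normalized tight frame $\{y_j : j\in\mathbb J\}$ of $\mathcal H$, the sum $\sum_j\langle y_j,y_j\rangle$ (converging weakly, i.e. in the weak* topology of the bidual $A^{**}$) is a continuous function on $X$ taking constant non-negative integer values on closed-open subsets of $X$. This limit does not depend on the choice of the standard normalized tight frame of $\mathcal H$.
   Context: A (left) Hilbert $A$-module is a left $A$-module $\mathcal H$ with an $A$-valued inner product $\langle\cdot,\cdot\rangle$, $A$-linear in the first argument, with $\langle x,y\rangle=\langle y,x\rangle^*$, $\langle x,x\rangle\ge0$ and $=0$ only for $x=0$, complete in $\|x\|=\|\langle x,x\rangle\|^{1/2}$. It is finitely generated if every element is an $A$-linear combination of finitely many fixed elements. A sequence $\{y_j:j\in\mathbb J\}$ ($\mathbb J$ finite or countable) is a normalized tight frame if $\langle x,x\rangle=\sum_j\langle x,y_j\rangle\langle y_j,x\rangle$ for all $x\in\mathcal H$, and standard if this series converges in norm for every $x$. *)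

theory Defs
  imports "HOL-Analysis.Analysis"
begin

text \<open>The algebra A = C(X): continuous complex-valued functions on the
  (compact Hausdorff) space given by the type 'x.\<close>

definition cx :: "('x::topological_space \<Rightarrow> complex) \<Rightarrow> bool" where
  "cx a \<longleftrightarrow> continuous_on UNIV a"

definition hilbert_CX_module ::
  "(('x::topological_space \<Rightarrow> complex) \<Rightarrow> 'h::ab_group_add \<Rightarrow> 'h) \<Rightarrow>
   ('h \<Rightarrow> 'h \<Rightarrow> ('x \<Rightarrow> complex)) \<Rightarrow> bool" where
  "hilbert_CX_module sm ip \<longleftrightarrow>
     \<comment> \<open>left A-module axioms\<close>
     (\<forall>a x y. cx a \<longrightarrow> sm a (x + y) = sm a x + sm a y) \<and>
     (\<forall>a b x. cx a \<longrightarrow> cx b \<longrightarrow> sm (\<lambda>t. a t + b t) x = sm a x + sm b x) \<and>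
     (\<forall>a b x. cx a \<longrightarrow> cx b \<longrightarrow> sm (\<lambda>t. a t * b t) x = sm a (sm b x)) \<and>
     (\<forall>x. sm (\<lambda>t. 1) x = x) \<and>
     \<comment> \<open>A-valued inner product\<close>
     (\<forall>x y. cx (ip x y)) \<and>
     (\<forall>a x y. cx a \<longrightarrow> ip (sm a x) y = (\<lambda>t. a t * ip x y t)) \<and>
     (\<forall>x z y. ip (x + z) y = (\<lambda>t. ip x y t + ip z y t)) \<and>
     (\<forall>x y t. ip x y t = cnj (ip y x t)) \<and>
     (\<forall>x t. ip x x t \<in> \<real> \<and> 0 \<le> Re (ip x x t)) \<and>
     (\<forall>x. ip x x = (\<lambda>t. 0) \<longrightarrow> x = 0) \<and>
     \<comment> \<open>completeness in the norm sqrt of sup-norm of ip x x\<close>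
     (\<forall>s :: nat \<Rightarrow> 'h.
        (\<forall>e>0. \<exists>N. \<forall>m\<ge>N. \<forall>n\<ge>N. \<forall>t. norm (ip (s m - s n) (s m - s n) t) < e) \<longrightarrow>
        (\<exists>l. \<forall>e>0. \<exists>N. \<forall>n\<ge>N. \<forall>t. norm (ip (s n - l) (s n - l) t) < e))"

definition finitely_generated_CX ::
  "(('x::topological_space \<Rightarrow> complex) \<Rightarrow> 'h::ab_group_add \<Rightarrow> 'h) \<Rightarrow> bool" where
  "finitely_generated_CX sm \<longleftrightarrow>
     (\<exists>G. finite G \<and> (\<forall>x. \<exists>c. (\<forall>g\<in>G. cx (c g)) \<and> x = (\<Sum>g\<in>G. sm (c g) g)))"

text \<open>Standard normalized tight frame indexed by a finite or countable index set
  J (a subset of nat): for every x the series of \<langle>x,y_j\<rangle>\<langle>y_j,x\<rangle> converges in the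
  norm of C(X) (uniformly on X) to \<langle>x,x\<rangle>.\<close>

definition std_nt_frame ::
  "('h::ab_group_add \<Rightarrow> 'h \<Rightarrow> ('x::topological_space \<Rightarrow> complex)) \<Rightarrow> nat set \<Rightarrow> (nat \<Rightarrow> 'h) \<Rightarrow> bool" where
  "std_nt_frame ip J y \<longleftrightarrow>
     (\<forall>x. uniform_limit UNIV
            (\<lambda>n t. \<Sum>j\<in>J \<inter> {..<n}. ip x (y j) t * ip (y j) x t)
            (ip x x) sequentially)"

end

theory Submission
  imports Defs
begin

locale hm =
  fixes sm :: "('x::topological_space \<Rightarrow> complex) \<Rightarrow> 'h::ab_group_add \<Rightarrow> 'h"
    and ip :: "'h \<Rightarrow> 'h \<Rightarrow> ('x \<Rightarrow> complex)"
  assumes H: "hilbert_CX_module sm ip"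
begin

lemmas Hc = H[unfolded hilbert_CX_module_def]
lemmas Hc1 = Hc[THEN conjunct1]
lemmas Hc2 = Hc[THEN conjunct2, THEN conjunct1]
lemmas Hc3 = Hc[THEN conjunct2, THEN conjunct2, THEN conjunct1]
lemmas Hc4 = Hc[THEN conjunct2, THEN conjunct2, THEN conjunct2, THEN conjunct1]
lemmas Hc5 = Hc[THEN conjunct2, THEN conjunct2, THEN conjunct2, THEN conjunct2, THEN conjunct1]
lemmas Hc6 = Hc[THEN conjunct2, THEN conjunct2, THEN conjunct2, THEN conjunct2, THEN conjunct2, THEN conjunct1]
lemmas Hc7 = Hc[THEN conjunct2, THEN conjunct2, THEN conjunct2, THEN conjunct2, THEN conjunct2, THEN conjunct2, THEN conjunct1]
lemmas Hc8 = Hc[THEN conjunct2, THEN conjunct2, THEN conjunct2, THEN conjunct2, THEN conjunct2, THEN conjunct2, THEN conjunct2, THEN conjunct1]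
lemmas Hc9 = Hc[THEN conjunct2, THEN conjunct2, THEN conjunct2, THEN conjunct2, THEN conjunct2, THEN conjunct2, THEN conjunct2, THEN conjunct2, THEN conjunct1]
lemmas Hc10 = Hc[THEN conjunct2, THEN conjunct2, THEN conjunct2, THEN conjunct2, THEN conjunct2, THEN conjunct2, THEN conjunct2, THEN conjunct2, THEN conjunct2, THEN conjunct1]
lemmas Hc11 = Hc[THEN conjunct2, THEN conjunct2, THEN conjunct2, THEN conjunct2, THEN conjunct2, THEN conjunct2, THEN conjunct2, THEN conjunct2, THEN conjunct2, THEN conjunct2]

definition sc :: "complex \<Rightarrow> 'h \<Rightarrow> 'h" where "sc a x = sm (\<lambda>_. a) x"
definition Q :: "'h \<Rightarrow> 'x \<Rightarrow> real" where "Q x t = Re (ip x x t)"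

lemma cx_const[simp]: "cx (\<lambda>t. c)" by (simp add: cx_def)
lemma cx_add: "cx a \<Longrightarrow> cx b \<Longrightarrow> cx (\<lambda>t. a t + b t)"
  by (simp add: cx_def continuous_on_add)
lemma cx_diff: "cx a \<Longrightarrow> cx b \<Longrightarrow> cx (\<lambda>t. a t - b t)"
  by (simp add: cx_def continuous_on_diff)
lemma cx_mult: "cx a \<Longrightarrow> cx b \<Longrightarrow> cx (\<lambda>t. a t * b t)"
  by (simp add: cx_def continuous_on_mult)
lemma cx_minus: "cx a \<Longrightarrow> cx (\<lambda>t. - a t)"
  by (simp add: cx_def continuous_on_minus)

lemma sm_add: "cx a \<Longrightarrow> sm a (x + y) = sm a x + sm a y"
  using Hc1 by blast
lemma sm_addf: "cx a \<Longrightarrow> cx b \<Longrightarrow> sm (\<lambda>t. a t + b t) x = sm a x + sm b x"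
  using Hc2 by blast
lemma sm_mult: "cx a \<Longrightarrow> cx b \<Longrightarrow> sm (\<lambda>t. a t * b t) x = sm a (sm b x)"
  using Hc3 by blast
lemma sm_one: "sm (\<lambda>t. 1) x = x"
  using Hc4 by blast
lemma ip_cx: "cx (ip x y)"
  using Hc5 by blast
lemma ip_sm: "cx a \<Longrightarrow> ip (sm a x) y t = a t * ip x y t"
  using Hc6 by simp
lemma ip_add: "ip (x + z) y t = ip x y t + ip z y t"
  by (simp add: Hc7)
lemma ip_sym: "ip x y t = cnj (ip y x t)"
  using Hc8 by blast
lemma ip_real: "ip x x t \<in> \<real>"
  using Hc9 by blast
lemma ip_pos: "0 \<le> Re (ip x x t)"
  using Hc9 by blast
lemma ip_definite: "ip x x = (\<lambda>t. 0) \<Longrightarrow> x = 0"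
  using Hc10 by blast
lemma ip_complete: fixes s :: "nat \<Rightarrow> 'h" assumes "(\<forall>e>0. \<exists>N. \<forall>m\<ge>N. \<forall>n\<ge>N. \<forall>t. norm (ip (s m - s n) (s m - s n) t) < e)" shows
        "(\<exists>l. \<forall>e>0. \<exists>N. \<forall>n\<ge>N. \<forall>t. norm (ip (s n - l) (s n - l) t) < e)"
by (rule mp[OF spec[OF Hc11, of s] assms])

lemma ip_self: "ip x x t = complex_of_real (Q x t)"
  using ip_real[of x t] unfolding Q_def by (simp add: complex_is_Real_iff complex_eq_iff)

lemma Q_nonneg: "0 \<le> Q x t" using ip_pos Q_def by simp

lemma sm_zero_fun: "sm (\<lambda>t. 0) x = 0"
proof -
  have "sm (\<lambda>t. 0 + 0) x = sm (\<lambda>t. 0) x + sm (\<lambda>t. 0) x" by (rule sm_addf) auto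
  then show ?thesis by simp
qed

lemma sm_zero: "cx a \<Longrightarrow> sm a 0 = 0"
  using sm_add[of a 0 0] by simp

lemma sm_minus: "cx a \<Longrightarrow> sm (\<lambda>t. - a t) x = - sm a x"
  using sm_addf[of a "\<lambda>t. - a t" x] cx_minus[of a] by (simp add: sm_zero_fun) (metis add.commute eq_neg_iff_add_eq_0)

lemma sm_diff: "cx a \<Longrightarrow> cx b \<Longrightarrow> sm (\<lambda>t. a t - b t) x = sm a x - sm b x"
  using sm_addf[of a "\<lambda>t. - b t" x] cx_minus[of b] sm_minus[of b x] by simp

lemma sm_minus_right: "cx a \<Longrightarrow> sm a (- x) = - sm a x"
  using sm_add[of a x "-x"] sm_zero[of a] by (simp add: eq_neg_iff_add_eq_0 add.commute)

lemma sm_diff_right: "cx a \<Longrightarrow> sm a (x - y) = sm a x - sm a y"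
  using sm_add[of a x "-y"] sm_minus_right[of a y] by simp

lemma sm_sum_right: "cx a \<Longrightarrow> sm a (\<Sum>g\<in>S. f g) = (\<Sum>g\<in>S. sm a (f g))"
  by (induction S rule: infinite_finite_induct) (auto simp: sm_zero sm_add)

lemma ip_zero_left[simp]: "ip 0 y t = 0"
  using ip_add[of 0 0 y t] by simp

lemma ip_zero_right[simp]: "ip y 0 t = 0"
  using ip_sym[of y 0 t] by simp

lemma ip_minus_left: "ip (- x) y t = - ip x y t"
  using ip_add[of x "-x" y t] by (simp add: eq_neg_iff_add_eq_0 add.commute)

lemma ip_diff_left: "ip (x - z) y t = ip x y t - ip z y t"
  using ip_add[of x "-z" y t] ip_minus_left[of z y t] by simp

lemma ip_add_right: "ip y (x + z) t = ip y x t + ip y z t"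
  using ip_sym[of y "x+z" t] ip_add[of x z y t] ip_sym[of x y t] ip_sym[of z y t] by simp

lemma ip_diff_right: "ip y (x - z) t = ip y x t - ip y z t"
  using ip_sym[of y "x-z" t] ip_diff_left[of x z y t] ip_sym[of x y t] ip_sym[of z y t] by simp

lemma ip_sm_right: "cx a \<Longrightarrow> ip y (sm a x) t = cnj (a t) * ip y x t"
  using ip_sym[of y "sm a x" t] ip_sm[of a x y t] ip_sym[of x y t] by simp

lemma ip_sum_left: "ip (\<Sum>g\<in>S. f g) y t = (\<Sum>g\<in>S. ip (f g) y t)"
  by (induction S rule: infinite_finite_induct) (auto simp: ip_add)

lemma ip_sum_right: "ip y (\<Sum>g\<in>S. f g) t = (\<Sum>g\<in>S. ip y (f g) t)"
  by (induction S rule: infinite_finite_induct) (auto simp: ip_add_right)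

lemma ip_sc: "ip (sc a x) y t = a * ip x y t"
  unfolding sc_def by (simp add: ip_sm)
lemma ip_sc_right: "ip y (sc a x) t = cnj a * ip y x t"
  unfolding sc_def by (simp add: ip_sm_right)

lemma sc_add: "sc a (x + y) = sc a x + sc a y" unfolding sc_def by (simp add: sm_add)
lemma sc_addf: "sc (a + b) x = sc a x + sc b x" unfolding sc_def using sm_addf[of "\<lambda>_. a" "\<lambda>_. b"] by simp
lemma sc_mult: "sc a (sc b x) = sc (a * b) x" unfolding sc_def using sm_mult[of "\<lambda>_. a" "\<lambda>_. b"] by simp
lemma sc_one: "sc 1 x = x" unfolding sc_def by (simp add: sm_one)

lemma sm_sc: "cx a \<Longrightarrow> sm a (sc c x) = sm (\<lambda>t. a t * c) x"
  unfolding sc_def using sm_mult[of a "\<lambda>_. c" x] by simp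

lemma Q_sc: "Q (sc a x) t = (cmod a)^2 * Q x t"
proof -
  have "ip (sc a x) (sc a x) t = (a * cnj a) * ip x x t" by (simp add: ip_sc ip_sc_right)
  also have "a * cnj a = complex_of_real ((cmod a)^2)" using complex_norm_square[of a] by simp
  finally show ?thesis unfolding Q_def by (simp add: ip_self)
qed


lemma form_CS:
  fixes b :: "'h \<Rightarrow> 'h \<Rightarrow> complex"
  assumes add: "\<And>x y z. b (x + y) z = b x z + b y z"
    and scl: "\<And>a x z. b (sc a x) z = a * b x z"
    and herm: "\<And>x z. b x z = cnj (b z x)"
    and pos: "\<And>x. 0 \<le> Re (b x x)"
  shows "(cmod (b x z))^2 \<le> Re (b x x) * Re (b z z)"
proof -
  define p where "p = b x z"
  have addr: "b u (v + w) = b u v + b u w" for u v w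
    using herm[of u "v+w"] add[of v w u] herm[of v u] herm[of w u] by simp
  have sclr: "b u (sc a v) = cnj a * b u v" for u v a
    using herm[of u "sc a v"] scl[of a v u] herm[of v u] by simp
  have realz: "b u u = complex_of_real (Re (b u u))" for u
  proof -
    have "Im (b u u) = - Im (b u u)" using arg_cong[OF herm[of u u], of Im] by simp
    then show ?thesis by (simp add: complex_eq_iff)
  qed
  have key: "0 \<le> Re (b x x) - 2*r*(cmod p)^2 + r^2*(cmod p)^2*Re (b z z)" for r :: real
  proof -
    define c where "c = - complex_of_real r * p"
    have pc: "p * cnj p = complex_of_real ((cmod p)^2)" using complex_norm_square[of p] by simp
    have pc2: "cnj p * p = complex_of_real ((cmod p)^2)" using pc by (simp add: mult.commute)
    have e1: "b (x + sc c z) (x + sc c z) = b x x + (b x (sc c z) + (c * b z x + c * b z (sc c z)))"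
      unfolding add[of x "sc c z"] addr[of x x "sc c z"] scl[of c z] addr[of z x "sc c z"] distrib_left
      by (rule add.assoc)
    have e2: "b x x + (b x (sc c z) + (c * b z x + c * b z (sc c z))) = b x x + (cnj c * p + (c * cnj p + (c * cnj c) * b z z))"
      unfolding p_def by (simp only: sclr herm[of z x] mult.assoc)
    have h1: "cnj c * p = - complex_of_real (r * (cmod p)^2)"
      unfolding c_def using pc2 by simp
    have h2: "c * cnj p = - complex_of_real (r * (cmod p)^2)"
      unfolding c_def using pc by simp
    have h3: "c * cnj c = complex_of_real (r^2 * (cmod p)^2)"
    proof -
      have "c * cnj c = complex_of_real (r^2) * (p * cnj p)" unfolding c_def by (simp add: power2_eq_square algebra_simps)
      then show ?thesis using pc by simp
    qed
    have "Re (b (x + sc c z) (x + sc c z)) = Re (b x x) - 2*r*(cmod p)^2 + r^2*(cmod p)^2*Re (b z z)"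
      unfolding e1 e2 h1 h2 h3 by simp
    then show ?thesis using pos[of "x + sc c z"] by simp
  qed
  show ?thesis
  proof (cases "Re (b z z) > 0")
    case True
    have "0 \<le> Re (b x x) - 2*(1/Re (b z z))*(cmod p)^2 + (1/Re (b z z))^2*(cmod p)^2*Re (b z z)"
      by (rule key)
    also have "\<dots> = Re (b x x) - (cmod p)^2 / Re (b z z)"
      using True by (simp add: field_simps power2_eq_square)
    finally have "(cmod p)^2 / Re (b z z) \<le> Re (b x x)" by simp
    then show ?thesis using True unfolding p_def by (simp add: field_simps)
  next
    case False
    then have z0: "Re (b z z) = 0" using pos[of z] by simp
    have "cmod p = 0"
    proof (rule ccontr)
      assume "cmod p \<noteq> 0"
      then have pp: "(cmod p)^2 > 0" by simp
      have "0 \<le> Re (b x x) - 2*((Re (b x x) + 1)/(2*(cmod p)^2))*(cmod p)^2 + ((Re (b x x) + 1)/(2*(cmod p)^2))^2*(cmod p)^2*Re (b z z)"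
        by (rule key)
      also have "\<dots> = -1" using pp z0 by (simp add: field_simps)
      finally show False by simp
    qed
    then show ?thesis unfolding p_def using z0 by simp
  qed
qed

lemma form_triangle:
  fixes b :: "'h \<Rightarrow> 'h \<Rightarrow> complex"
  assumes add: "\<And>x y z. b (x + y) z = b x z + b y z"
    and scl: "\<And>a x z. b (sc a x) z = a * b x z"
    and herm: "\<And>x z. b x z = cnj (b z x)"
    and pos: "\<And>x. 0 \<le> Re (b x x)"
  shows "sqrt (Re (b (x + z) (x + z))) \<le> sqrt (Re (b x x)) + sqrt (Re (b z z))"
proof -
  have addr: "b u (v + w) = b u v + b u w" for u v w
    using herm[of u "v+w"] add[of v w u] herm[of v u] herm[of w u] by simp
  have cs: "(cmod (b x z))^2 \<le> Re (b x x) * Re (b z z)"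
    by (rule form_CS[OF add scl herm pos])
  have "Re (b x z) \<le> cmod (b x z)" by (rule complex_Re_le_cmod)
  also have "cmod (b x z) \<le> sqrt (Re (b x x) * Re (b z z))"
    using cs by (metis norm_ge_zero real_le_rsqrt)
  finally have r: "Re (b x z) \<le> sqrt (Re (b x x)) * sqrt (Re (b z z))" by (simp add: real_sqrt_mult)
  have "Re (b (x + z) (x + z)) = Re (b x x) + Re (b z z) + 2 * Re (b x z)"
    using herm[of z x] by (simp add: add addr)
  also have "\<dots> \<le> (sqrt (Re (b x x)) + sqrt (Re (b z z)))^2"
    using r pos[of x] pos[of z] by (simp add: power2_eq_square algebra_simps)
  finally show ?thesis
    by (metis real_le_lsqrt add_nonneg_nonneg real_sqrt_ge_zero pos)
qed

end

context hm begin

lemma sc_zero[simp]: "sc 0 x = 0" unfolding sc_def by (simp add: sm_zero_fun)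

lemma vs: "vector_space sc"
  by unfold_locales (auto simp: sc_add sc_addf sc_mult sc_one)

lemma ip_sm_sum: "(\<forall>g\<in>G. cx (c g)) \<Longrightarrow> ip (\<Sum>g\<in>G. sm (c g) g) z s = (\<Sum>g\<in>G. c g s * ip g z s)"
  by (simp add: ip_sum_left ip_sm)

lemma ip_sc_sum: "ip (\<Sum>g\<in>G. sc (v g) g) z s = (\<Sum>g\<in>G. v g * ip g z s)"
  by (simp add: ip_sum_left ip_sc)

lemma Q_eqI: assumes "\<And>z. ip w1 z s = ip w2 z s" shows "Q w1 s = Q w2 s"
proof -
  have "ip w1 w1 s = ip w2 w1 s" by (rule assms)
  also have "\<dots> = cnj (ip w1 w2 s)" by (rule ip_sym)
  also have "\<dots> = cnj (ip w2 w2 s)" by (simp add: assms)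
  finally show ?thesis unfolding Q_def by simp
qed

definition ON :: "'x \<Rightarrow> (nat \<Rightarrow> 'h) \<Rightarrow> nat \<Rightarrow> bool" where
  "ON s e M \<longleftrightarrow> (\<forall>i<M. \<forall>j<M. ip (e i) (e j) s = (if i = j then 1 else 0))"

lemma ipform_CS: "(cmod (ip x z s))^2 \<le> Q x s * Q z s"
  unfolding Q_def
  by (rule form_CS[where b="\<lambda>u v. ip u v s"]) (auto simp: ip_add ip_sc ip_pos intro: ip_sym)

lemma null_orth: "Q p s = 0 \<Longrightarrow> ip p z s = 0"
  using ipform_CS[of p z s] by simp

end

locale hmg = hm sm ip for sm :: "('x::topological_space \<Rightarrow> complex) \<Rightarrow> 'h::ab_group_add \<Rightarrow> 'h"
    and ip :: "'h \<Rightarrow> 'h \<Rightarrow> ('x \<Rightarrow> complex)" +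
  fixes G :: "'h set"
  assumes finG: "finite G"
    and gen: "\<forall>x. \<exists>c. (\<forall>g\<in>G. cx (c g)) \<and> x = (\<Sum>g\<in>G. sm (c g) g)"
begin

lemma ON_bound:
  assumes on: "ON s e M"
  shows "M \<le> card G"
proof -
  interpret V: vector_space sc by (rule vs)
  obtain c where c: "\<And>x. (\<forall>g\<in>G. cx (c x g)) \<and> x = (\<Sum>g\<in>G. sm (c x g) g)"
    using gen by metis
  define e' where "e' i = (\<Sum>g\<in>G. sc (c (e i) g s) g)" for i
  have ipe: "ip (e' i) z s = ip (e i) z s" for i z
  proof -
    have "ip (e i) z s = ip (\<Sum>g\<in>G. sm (c (e i) g) g) z s" using c[of "e i"] by metis
    also have "\<dots> = (\<Sum>g\<in>G. c (e i) g s * ip g z s)" by (rule ip_sm_sum) (use c in blast)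
    finally show ?thesis unfolding e'_def by (simp add: ip_sc_sum)
  qed
  have on': "ip (e' i) (e' j) s = (if i = j then 1 else 0)" if "i < M" "j < M" for i j
  proof -
    have "ip (e' i) (e' j) s = ip (e i) (e' j) s" by (rule ipe)
    also have "\<dots> = cnj (ip (e' j) (e i) s)" by (rule ip_sym)
    also have "\<dots> = cnj (ip (e j) (e i) s)" by (simp only: ipe)
    also have "\<dots> = ip (e i) (e j) s" by (rule ip_sym[symmetric])
    finally show ?thesis using on that unfolding ON_def by simp
  qed
  have inj: "inj_on e' {..<M}"
  proof (rule inj_onI)
    fix i j assume "i \<in> {..<M}" "j \<in> {..<M}" "e' i = e' j"
    then show "i = j" using on'[of i j] on'[of i i] by (auto split: if_splits)
  qed
  define S where "S = e' ` {..<M}"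
  have cardS: "card S = M" unfolding S_def using inj by (simp add: card_image)
  have span: "S \<subseteq> V.span G"
    unfolding S_def e'_def
  proof (rule image_subsetI)
    fix i show "(\<Sum>g\<in>G. sc (c (e i) g s) g) \<in> V.span G"
      by (rule V.span_sum, rule V.span_scale, rule V.span_base) simp
  qed
  have indep: "V.independent S"
  proof
    assume "V.dependent S"
    then obtain a where a: "a \<in> S" "a \<in> V.span (S - {a})" unfolding V.dependent_def by blast
    then obtain k where k: "k < M" "a = e' k" unfolding S_def by auto
    have "ip u (e' k) s = 0" if "u \<in> V.span (S - {a})" for u
    proof (rule V.span_induct[OF that, where P="\<lambda>u. ip u (e' k) s = 0"])
      show "V.subspace {u. ip u (e' k) s = 0}"
        unfolding V.subspace_def by (auto simp: ip_add ip_sc)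
    next
      fix x assume "x \<in> S - {a}"
      then obtain i where "i < M" "x = e' i" "i \<noteq> k" unfolding S_def using k by auto
      then show "ip x (e' k) s = 0" using on'[of i k] k by simp
    qed
    then have "ip (e' k) (e' k) s = 0" using a k by simp
    then show False using on'[of k k] k by simp
  qed
  have "card S \<le> card G" using V.independent_span_bound[OF finG indep span] by simp
  then show ?thesis using cardS by simp
qed

definition dm :: "'x \<Rightarrow> nat" where "dm s = (GREATEST M. \<exists>e. ON s e M)"

lemma dm_ex: "\<exists>e. ON s e (dm s)"
  unfolding dm_def
  by (rule GreatestI_nat[where k=0 and b="card G"]) (auto simp: ON_def intro: ON_bound)

lemma dm_max: "ON s e M \<Longrightarrow> M \<le> dm s"
  unfolding dm_def
  by (rule Greatest_le_nat[where b="card G"]) (auto intro: ON_bound)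

lemma dm_le: "dm s \<le> card G"
  using dm_ex ON_bound by blast

lemma parseval:
  assumes on: "ON s e (dm s)"
  shows "ip x z s = (\<Sum>i<dm s. ip x (e i) s * ip (e i) z s)"
proof -
  define M where "M = dm s"
  define p where "p = x - (\<Sum>i<M. sc (ip x (e i) s) (e i))"
  have pe: "ip p (e k) s = 0" if "k < M" for k
  proof -
    have "ip p (e k) s = ip x (e k) s - (\<Sum>i<M. ip x (e i) s * ip (e i) (e k) s)"
      unfolding p_def by (simp add: ip_diff_left ip_sum_left ip_sc)
    also have "(\<Sum>i<M. ip x (e i) s * ip (e i) (e k) s) = (\<Sum>i<M. if i = k then ip x (e k) s else 0)"
      using on that unfolding ON_def M_def by (intro sum.cong) auto
    also have "\<dots> = ip x (e k) s" using that by simp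
    finally show ?thesis by simp
  qed
  have Qp: "Q p s = 0"
  proof (rule ccontr)
    assume "Q p s \<noteq> 0"
    then have qp: "Q p s > 0" using Q_nonneg[of p s] by simp
    define e' where "e' = e(M := sc (complex_of_real (1 / sqrt (Q p s))) p)"
    have "ON s e' (Suc M)"
      unfolding ON_def
    proof (intro allI impI)
      fix i j assume ij: "i < Suc M" "j < Suc M"
      have nn: "ip (e' M) (e' M) s = 1"
      proof -
        have "ip (e' M) (e' M) s = complex_of_real (Q (e' M) s)" by (rule ip_self)
        also have "Q (e' M) s = (cmod (complex_of_real (1 / sqrt (Q p s))))^2 * Q p s"
          unfolding e'_def by (simp add: Q_sc)
        also have "\<dots> = 1"
        proof -
          have "cmod (complex_of_real (1 / sqrt (Q p s))) = 1 / sqrt (Q p s)" using qp by (simp add: norm_divide)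
          then show ?thesis using qp by (simp add: power_divide)
        qed
        finally show ?thesis by simp
      qed
      have mk: "ip (e' M) (e' k) s = 0" if "k < M" for k
        unfolding e'_def using that pe[OF that] by (simp add: ip_sc)
      have km: "ip (e' k) (e' M) s = 0" if "k < M" for k
        using mk[OF that] ip_sym[of "e' k" "e' M" s] by simp
      show "ip (e' i) (e' j) s = (if i = j then 1 else 0)"
      proof (cases "i = M")
        case True
        then show ?thesis using nn mk ij by (cases "j = M") auto
      next
        case False
        then have i: "i < M" using ij by simp
        show ?thesis
        proof (cases "j = M")
          case True then show ?thesis using km[OF i] i by simp
        next
          case False
          then have "j < M" using ij by simp
          then show ?thesis using on i unfolding ON_def M_def e'_def by simp
        qed
      qed
    qed
    then have "Suc M \<le> dm s" by (rule dm_max)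
    then show False unfolding M_def by simp
  qed
  have xe: "p + (\<Sum>i<M. sc (ip x (e i) s) (e i)) = x" unfolding p_def by simp
  have "ip x z s = ip (p + (\<Sum>i<M. sc (ip x (e i) s) (e i))) z s" by (simp only: xe)
  also have "\<dots> = ip p z s + (\<Sum>i<M. ip x (e i) s * ip (e i) z s)"
    by (simp only: ip_add ip_sum_left ip_sc)
  finally have "ip x z s = ip p z s + (\<Sum>i<M. ip x (e i) s * ip (e i) z s)" .
  then show ?thesis using null_orth[OF Qp] unfolding M_def by simp
qed

end

context hmg begin

lemma frame_pointwise:
  assumes fr: "std_nt_frame ip J y"
  shows "(\<lambda>j. if j \<in> J then ip x (y j) s * ip (y j) x s else 0) sums ip x x s"
proof -
  have uni: "uniform_limit UNIV (\<lambda>n t. \<Sum>j\<in>J \<inter> {..<n}. ip x (y j) t * ip (y j) x t) (ip x x) sequentially"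
    using fr unfolding std_nt_frame_def by blast
  have "((\<lambda>n. \<Sum>j\<in>J \<inter> {..<n}. ip x (y j) s * ip (y j) x s) \<longlongrightarrow> ip x x s) sequentially"
    using tendsto_uniform_limitI[OF uni, of s] by simp
  moreover have "(\<Sum>j\<in>J \<inter> {..<n}. ip x (y j) s * ip (y j) x s) = (\<Sum>j<n. if j \<in> J then ip x (y j) s * ip (y j) x s else 0)" for n
    by (simp add: sum.inter_restrict[symmetric] Int_commute)
  ultimately show ?thesis unfolding sums_def by simp
qed

lemma frame_sums:
  assumes fr: "std_nt_frame ip J y"
  shows "(\<lambda>j. if j \<in> J then ip (y j) (y j) s else 0) sums of_nat (dm s)"
proof -
  obtain e where on: "ON s e (dm s)" using dm_ex by blast
  have "(\<lambda>j. \<Sum>i<dm s. if j \<in> J then ip (e i) (y j) s * ip (y j) (e i) s else 0) sums (\<Sum>i<dm s. ip (e i) (e i) s)"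
    by (rule sums_sum) (rule frame_pointwise[OF fr])
  moreover have "(\<Sum>i<dm s. ip (e i) (e i) s) = of_nat (dm s)"
    using on unfolding ON_def by simp
  moreover have "(\<Sum>i<dm s. if j \<in> J then ip (e i) (y j) s * ip (y j) (e i) s else 0) = (if j \<in> J then ip (y j) (y j) s else 0)" for j
    using parseval[OF on, of "y j" "y j"] by (simp add: mult.commute)
  ultimately show ?thesis by simp
qed

end

locale hmgc = hmg sm ip G for sm :: "('x::topological_space \<Rightarrow> complex) \<Rightarrow> 'h::ab_group_add \<Rightarrow> 'h"
    and ip :: "'h \<Rightarrow> 'h \<Rightarrow> ('x \<Rightarrow> complex)" and G +
  assumes cpt: "compact (UNIV :: 'x set)"
begin

lemma cx_bounded: fixes a :: "'x \<Rightarrow> complex" assumes "cx a" shows "\<exists>k. \<forall>t. cmod (a t) \<le> k"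
proof -
  have "compact (a ` UNIV)" using assms cpt unfolding cx_def by (intro compact_continuous_image)
  then have "bounded (a ` UNIV)" by (rule compact_imp_bounded)
  then show ?thesis unfolding bounded_iff by auto
qed

lemma Q_cont: "continuous_on UNIV (\<lambda>t. Q x t)"
  unfolding Q_def using ip_cx[of x x] unfolding cx_def by (intro continuous_intros)

lemma Q_bounded: "\<exists>k. \<forall>t. Q x t \<le> k"
proof -
  obtain k where "\<forall>t. cmod (ip x x t) \<le> k" using cx_bounded[OF ip_cx] by blast
  then have "\<forall>t. Q x t \<le> k" unfolding Q_def using complex_Re_le_cmod order_trans by blast
  then show ?thesis by blast
qed

definition nrm :: "'h \<Rightarrow> real" where "nrm x = Sup (range (\<lambda>t. sqrt (Q x t)))"

lemma nrm_bdd: "bdd_above (range (\<lambda>t. sqrt (Q x t)))"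
proof -
  obtain k where "\<forall>t. Q x t \<le> k" using Q_bounded by blast
  then show ?thesis by (intro bdd_aboveI[of _ "sqrt k"]) auto
qed

lemma nrm_ge: "sqrt (Q x t) \<le> nrm x"
  unfolding nrm_def by (rule cSup_upper[OF rangeI nrm_bdd])

lemma nrm_le: "(\<And>t. sqrt (Q x t) \<le> r) \<Longrightarrow> nrm x \<le> r"
  unfolding nrm_def by (rule cSup_least) auto

lemma nrm_nonneg: "0 \<le> nrm x"
  using nrm_ge[of x undefined] real_sqrt_ge_zero[OF Q_nonneg, of x undefined] by linarith

lemma Q_le_nrm: "Q x t \<le> (nrm x)^2"
proof -
  have "Q x t = (sqrt (Q x t))^2" using Q_nonneg[of x t] by simp
  also have "\<dots> \<le> (nrm x)^2" using nrm_ge[of x t] by (intro power_mono) (auto simp: Q_nonneg)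
  finally show ?thesis .
qed

lemma Q_triangle: "sqrt (Q (x + z) t) \<le> sqrt (Q x t) + sqrt (Q z t)"
  unfolding Q_def
  by (rule form_triangle[where b="\<lambda>u v. ip u v t"]) (auto simp: ip_add ip_sc ip_pos intro: ip_sym)

lemma nrm_triangle: "nrm (x + z) \<le> nrm x + nrm z"
proof (rule nrm_le)
  fix t
  have "sqrt (Q (x + z) t) \<le> sqrt (Q x t) + sqrt (Q z t)" by (rule Q_triangle)
  also have "\<dots> \<le> nrm x + nrm z" by (intro add_mono nrm_ge)
  finally show "sqrt (Q (x + z) t) \<le> nrm x + nrm z" .
qed

lemma Q_minus: "Q (- x) t = Q x t"
proof -
  have "ip (- x) (- x) t = - ip x (- x) t" by (rule ip_minus_left)
  also have "ip x (- x) t = cnj (ip (- x) x t)" by (rule ip_sym)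
  also have "ip (- x) x t = - ip x x t" by (rule ip_minus_left)
  also have "- cnj (- ip x x t) = cnj (ip x x t)" by simp
  also have "cnj (ip x x t) = ip x x t" by (rule ip_sym[symmetric])
  finally have "ip (- x) (- x) t = ip x x t" .
  then show ?thesis unfolding Q_def by simp
qed

lemma nrm_minus: "nrm (- x) = nrm x"
  unfolding nrm_def Q_minus ..

lemma nrm_diff_commute: "nrm (x - z) = nrm (z - x)"
  by (metis minus_diff_eq nrm_minus)

lemma nrm_zero_iff: "nrm x = 0 \<longleftrightarrow> x = 0"
proof
  assume "nrm x = 0"
  then have "Q x t = 0" for t using Q_le_nrm[of x t] Q_nonneg[of x t] by simp
  then have "ip x x = (\<lambda>t. 0)" by (simp add: ip_self fun_eq_iff)
  then show "x = 0" by (rule ip_definite)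
next
  assume "x = 0"
  then show "nrm x = 0" using nrm_nonneg[of x] by (intro antisym nrm_le) (simp_all add: Q_def)
qed

lemma nrm_diff_triangle: "nrm (x - z) \<le> nrm x + nrm z"
  using nrm_triangle[of x "- z"] by (simp add: nrm_minus)

lemma ms: "Metric_space UNIV (\<lambda>x y. nrm (x - y))"
proof
  show "0 \<le> nrm (x - y)" for x y by (rule nrm_nonneg)
  show "nrm (x - y) = nrm (y - x)" for x y by (rule nrm_diff_commute)
  show "nrm (x - y) = 0 \<longleftrightarrow> x = y" for x y by (simp add: nrm_zero_iff)
  show "nrm (x - z) \<le> nrm (x - y) + nrm (y - z)" for x y z
    using nrm_triangle[of "x - y" "y - z"] by simp
qed

lemma mcomplete: "Metric_space.mcomplete UNIV (\<lambda>x y. nrm (x - y))"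
proof -
  interpret MS: Metric_space UNIV "\<lambda>x y. nrm (x - y)" by (rule ms)
  show ?thesis unfolding MS.mcomplete_def
  proof (intro allI impI)
    fix \<sigma> :: "nat \<Rightarrow> 'h" assume "MS.MCauchy \<sigma>"
    then have cau: "\<forall>\<epsilon>>0. \<exists>N. \<forall>n n'. N \<le> n \<longrightarrow> N \<le> n' \<longrightarrow> nrm (\<sigma> n - \<sigma> n') < \<epsilon>"
      unfolding MS.MCauchy_def by simp
    have "\<forall>e>0. \<exists>N. \<forall>m\<ge>N. \<forall>n\<ge>N. \<forall>t. norm (ip (\<sigma> m - \<sigma> n) (\<sigma> m - \<sigma> n) t) < e"
    proof (intro allI impI)
      fix e :: real assume e: "e > 0"
      have se: "sqrt e > 0" using e by simp
      from cau[rule_format, OF se] obtain N where N: "\<forall>n n'. N \<le> n \<longrightarrow> N \<le> n' \<longrightarrow> nrm (\<sigma> n - \<sigma> n') < sqrt e"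
        by blast
      show "\<exists>N. \<forall>m\<ge>N. \<forall>n\<ge>N. \<forall>t. norm (ip (\<sigma> m - \<sigma> n) (\<sigma> m - \<sigma> n) t) < e"
      proof (intro exI allI impI)
        fix m n t assume "N \<le> m" "N \<le> n"
        then have lt: "nrm (\<sigma> m - \<sigma> n) < sqrt e" using N by blast
        have "norm (ip (\<sigma> m - \<sigma> n) (\<sigma> m - \<sigma> n) t) = Q (\<sigma> m - \<sigma> n) t"
          by (simp add: ip_self Q_nonneg)
        also have "\<dots> \<le> (nrm (\<sigma> m - \<sigma> n))^2" by (rule Q_le_nrm)
        also have "\<dots> < (sqrt e)^2" using lt nrm_nonneg by (intro power_strict_mono) auto
        also have "\<dots> = e" using e by simp
        finally show "norm (ip (\<sigma> m - \<sigma> n) (\<sigma> m - \<sigma> n) t) < e" .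
      qed
    qed
    from ip_complete[OF this] obtain l where l: "\<forall>e>0. \<exists>N. \<forall>n\<ge>N. \<forall>t. norm (ip (\<sigma> n - l) (\<sigma> n - l) t) < e"
      by blast
    have "limitin MS.mtopology \<sigma> l sequentially"
      unfolding MS.limitin_metric
    proof (intro conjI allI impI)
      show "l \<in> UNIV" by simp
      fix \<epsilon> :: real assume \<epsilon>: "\<epsilon> > 0"
      have e2: "(\<epsilon>/2)^2 > 0" using \<epsilon> by simp
      from l[rule_format, OF e2] obtain N where N: "\<forall>n\<ge>N. \<forall>t. norm (ip (\<sigma> n - l) (\<sigma> n - l) t) < (\<epsilon>/2)^2"
        by blast
      show "\<forall>\<^sub>F n in sequentially. \<sigma> n \<in> UNIV \<and> nrm (\<sigma> n - l) < \<epsilon>"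
        unfolding eventually_sequentially
      proof (intro exI allI impI conjI)
        fix n assume n: "N \<le> n"
        show "\<sigma> n \<in> UNIV" by simp
        have "nrm (\<sigma> n - l) \<le> \<epsilon>/2"
        proof (rule nrm_le)
          fix t
          have "Q (\<sigma> n - l) t < (\<epsilon>/2)^2"
            using N n by (simp add: ip_self Q_nonneg)
          then have "sqrt (Q (\<sigma> n - l) t) < sqrt ((\<epsilon>/2)^2)" by (rule real_sqrt_less_mono)
          also have "\<dots> = \<epsilon>/2" using \<epsilon> by simp
          finally show "sqrt (Q (\<sigma> n - l) t) \<le> \<epsilon>/2" by simp
        qed
        then show "nrm (\<sigma> n - l) < \<epsilon>" using \<epsilon> by simp
      qed
    qed
    then show "\<exists>x. limitin MS.mtopology \<sigma> x sequentially" by blast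
  qed
qed

end

context hmgc begin

definition Tf :: "('h \<Rightarrow> 'x \<Rightarrow> complex) \<Rightarrow> 'h" where "Tf c = (\<Sum>g\<in>G. sm (c g) g)"
definition Ts :: "('h \<Rightarrow> complex) \<Rightarrow> 'h" where "Ts v = (\<Sum>g\<in>G. sc (v g) g)"
definition Bk :: "real \<Rightarrow> ('h \<Rightarrow> 'x \<Rightarrow> complex) set" where
  "Bk r = {c. \<forall>g\<in>G. cx (c g) \<and> (\<forall>t. cmod (c g t) \<le> r)}"

lemma covers: "\<exists>k::nat. x \<in> Tf ` Bk (real k)"
proof -
  obtain c where c: "\<forall>g\<in>G. cx (c g)" "x = (\<Sum>g\<in>G. sm (c g) g)" using gen by blast
  have "\<forall>g\<in>G. \<exists>k. \<forall>t. cmod (c g t) \<le> k" using c(1) cx_bounded by blast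
  from bchoice[OF this] obtain kf where kf: "\<forall>g\<in>G. \<forall>t. cmod (c g t) \<le> kf g" by blast
  define K where "K = (\<Sum>g\<in>G. \<bar>kf g\<bar>)"
  have "kf g \<le> K" if "g \<in> G" for g
  proof -
    have "\<bar>kf g\<bar> \<le> K" unfolding K_def using finG that by (intro member_le_sum) auto
    then show ?thesis by simp
  qed
  moreover have "K \<le> real (nat \<lceil>K\<rceil>)" by linarith
  ultimately have "c \<in> Bk (real (nat \<lceil>K\<rceil>))" unfolding Bk_def using c(1) kf
  proof (intro CollectI ballI conjI allI)
    fix g t assume g: "g \<in> G"
    show "cx (c g)" using c(1) g by blast
    have "cmod (c g t) \<le> kf g" using kf g by blast
    also have "kf g \<le> K" using \<open>\<And>g. g \<in> G \<Longrightarrow> kf g \<le> K\<close> g by blast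
    also have "K \<le> real (nat \<lceil>K\<rceil>)" by linarith
    finally show "cmod (c g t) \<le> real (nat \<lceil>K\<rceil>)" .
  qed
  moreover have "x = Tf c" unfolding Tf_def using c(2) .
  ultimately show ?thesis by blast
qed

lemma baire: "\<exists>r x0 \<rho>. \<rho> > 0 \<and> (\<forall>x. nrm (x0 - x) < \<rho> \<longrightarrow> (\<forall>\<epsilon>>0. \<exists>c\<in>Bk r. nrm (x - Tf c) < \<epsilon>))"
proof -
  interpret MS: Metric_space UNIV "\<lambda>x y. nrm (x - y)" by (rule ms)
  define S where "S k = MS.mtopology closure_of (Tf ` Bk (real k))" for k :: nat
  have "\<exists>k. MS.mtopology interior_of S k \<noteq> {}"
  proof (rule ccontr)
    assume "\<not> (\<exists>k. MS.mtopology interior_of S k \<noteq> {})"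
    then have empty: "\<And>k. MS.mtopology interior_of S k = {}" by blast
    have "MS.mtopology interior_of \<Union>(range S) = {}"
    proof (rule MS.metric_Baire_category_alt[OF mcomplete])
      show "countable (range S)" by simp
      fix T assume "T \<in> range S"
      then show "closedin MS.mtopology T \<and> MS.mtopology interior_of T = {}"
        using empty unfolding S_def by auto
    qed
    moreover have "\<Union>(range S) = UNIV"
    proof (rule antisym)
      show "UNIV \<subseteq> \<Union>(range S)"
      proof
        fix x :: 'h
        obtain k where "x \<in> Tf ` Bk (real k)" using covers by blast
        moreover have "Tf ` Bk (real k) \<subseteq> S k" unfolding S_def by (rule closure_of_subset) simp
        ultimately show "x \<in> \<Union>(range S)" by blast
      qed
    qed simp
    ultimately show False using interior_of_topspace[of MS.mtopology] MS.topspace_mtopology by simp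
  qed
  then obtain k x0 where x0: "x0 \<in> MS.mtopology interior_of S k" by blast
  have "openin MS.mtopology (MS.mtopology interior_of S k)" by (rule openin_interior_of)
  then obtain \<rho> where \<rho>: "\<rho> > 0" "MS.mball x0 \<rho> \<subseteq> MS.mtopology interior_of S k"
    using x0 unfolding MS.openin_mtopology by blast
  have "\<forall>x. nrm (x0 - x) < \<rho> \<longrightarrow> (\<forall>\<epsilon>>0. \<exists>c\<in>Bk (real k). nrm (x - Tf c) < \<epsilon>)"
  proof (intro allI impI)
    fix x :: 'h and \<epsilon> :: real
    assume x: "nrm (x0 - x) < \<rho>" and \<epsilon>: "\<epsilon> > 0"
    have "x \<in> MS.mball x0 \<rho>" using x by simp
    then have "x \<in> MS.mtopology interior_of S k" using \<rho>(2) by (rule subsetD[rotated])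
    then have "x \<in> S k" by (rule interior_of_subset[THEN subsetD])
    then have "x \<in> {x \<in> UNIV. \<forall>r>0. \<exists>y\<in>Tf ` Bk (real k). y \<in> MS.mball x r}"
      unfolding S_def MS.metric_closure_of .
    then have "\<forall>r>0. \<exists>y\<in>Tf ` Bk (real k). y \<in> MS.mball x r" by simp
    then obtain y where "y \<in> Tf ` Bk (real k)" "y \<in> MS.mball x \<epsilon>" using \<epsilon> by blast
    then show "\<exists>c\<in>Bk (real k). nrm (x - Tf c) < \<epsilon>" by auto
  qed
  then show ?thesis using \<rho>(1) by (intro exI[of _ "real k"] exI[of _ x0] exI[of _ \<rho>]) simp
qed

lemma Tf_diff:
  assumes "c1 \<in> Bk r1" "c2 \<in> Bk r2"
  shows "Tf (\<lambda>g t. c1 g t - c2 g t) = Tf c1 - Tf c2"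
proof -
  have "Tf (\<lambda>g t. c1 g t - c2 g t) = (\<Sum>g\<in>G. sm (c1 g) g - sm (c2 g) g)"
    unfolding Tf_def using assms unfolding Bk_def by (intro sum.cong) (auto simp: sm_diff)
  then show ?thesis unfolding Tf_def by (simp add: sum_subtractf)
qed

lemma approx0: "\<exists>r \<rho>. \<rho> > 0 \<and> r \<ge> 0 \<and> (\<forall>x. nrm x < \<rho> \<longrightarrow> (\<forall>\<epsilon>>0. \<exists>c\<in>Bk r. nrm (x - Tf c) < \<epsilon>))"
proof -
  from baire obtain r0 x0 \<rho> where \<rho>: "\<rho> > 0" and B: "\<forall>x. nrm (x0 - x) < \<rho> \<longrightarrow> (\<forall>\<epsilon>>0. \<exists>c\<in>Bk r0. nrm (x - Tf c) < \<epsilon>)"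
    by blast
  define r where "r = 2 * max r0 0"
  have "\<forall>x. nrm x < \<rho> \<longrightarrow> (\<forall>\<epsilon>>0. \<exists>c\<in>Bk r. nrm (x - Tf c) < \<epsilon>)"
  proof (intro allI impI)
    fix x :: 'h and \<epsilon> :: real
    assume x: "nrm x < \<rho>" and \<epsilon>: "\<epsilon> > 0"
    have e2: "\<epsilon>/2 > 0" using \<epsilon> by simp
    have "nrm (x0 - (x0 + x)) < \<rho>" using x by (simp add: nrm_minus)
    from B[rule_format, OF this e2] obtain c1 where c1: "c1 \<in> Bk r0" "nrm (x0 + x - Tf c1) < \<epsilon>/2"
      by blast
    have "nrm (x0 - x0) < \<rho>" using \<rho> nrm_zero_iff[of 0] by simp
    from B[rule_format, OF this e2] obtain c2 where c2: "c2 \<in> Bk r0" "nrm (x0 - Tf c2) < \<epsilon>/2"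
      by blast
    define c where "c = (\<lambda>g t. c1 g t - c2 g t)"
    have "c \<in> Bk r"
      unfolding Bk_def r_def c_def
    proof (intro CollectI ballI conjI allI)
      fix g t assume g: "g \<in> G"
      show "cx (\<lambda>t. c1 g t - c2 g t)" using c1(1) c2(1) g unfolding Bk_def by (auto intro: cx_diff)
      have "cmod (c1 g t - c2 g t) \<le> cmod (c1 g t) + cmod (c2 g t)" by (rule norm_triangle_ineq4)
      also have "\<dots> \<le> r0 + r0" using c1(1) c2(1) g unfolding Bk_def by (intro add_mono) auto
      finally show "cmod (c1 g t - c2 g t) \<le> 2 * max r0 0" by simp
    qed
    moreover have eq: "x - Tf c = (x0 + x - Tf c1) - (x0 - Tf c2)"
      unfolding c_def Tf_diff[OF c1(1) c2(1)] by (simp add: algebra_simps)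
    have "nrm (x - Tf c) \<le> nrm (x0 + x - Tf c1) + nrm (x0 - Tf c2)"
      unfolding eq by (rule nrm_diff_triangle)
    then have "nrm (x - Tf c) < \<epsilon>" using c1(2) c2(2) by simp
    ultimately show "\<exists>c\<in>Bk r. nrm (x - Tf c) < \<epsilon>" by blast
  qed
  moreover have "r \<ge> 0" unfolding r_def by simp
  ultimately show ?thesis using \<rho> by blast
qed


lemma Q_sm: assumes "cx a" shows "Q (sm a x) t = (cmod (a t))^2 * Q x t"
proof -
  have "ip (sm a x) (sm a x) t = (a t * cnj (a t)) * ip x x t" using assms by (simp add: ip_sm ip_sm_right)
  also have "a t * cnj (a t) = complex_of_real ((cmod (a t))^2)" using complex_norm_square[of "a t"] by simp
  finally show ?thesis unfolding Q_def by (simp add: ip_self)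
qed

lemma Tf_ip: "c \<in> Bk r \<Longrightarrow> ip (Tf c) z s = (\<Sum>g\<in>G. c g s * ip g z s)"
  unfolding Tf_def Bk_def by (rule ip_sm_sum) blast

lemma Ts_ip: "ip (Ts v) z s = (\<Sum>g\<in>G. v g * ip g z s)"
  unfolding Ts_def by (rule ip_sc_sum)

lemma local_approx: "\<exists>K\<ge>0. \<forall>x s \<delta>. \<delta> > 0 \<longrightarrow> (\<exists>v. Q (x - Ts v) s < \<delta> \<and> (\<forall>g\<in>G. cmod (v g) \<le> K * sqrt (Q x s)))"
proof -
  from approx0 obtain r \<rho> where \<rho>: "\<rho> > 0" "r \<ge> 0"
    and A: "\<forall>x. nrm x < \<rho> \<longrightarrow> (\<forall>\<epsilon>>0. \<exists>c\<in>Bk r. nrm (x - Tf c) < \<epsilon>)" by blast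
  define K where "K = 2 * r / \<rho>"
  have K0: "K \<ge> 0" unfolding K_def using \<rho> by simp
  have "\<exists>v. Q (x - Ts v) s < \<delta> \<and> (\<forall>g\<in>G. cmod (v g) \<le> K * sqrt (Q x s))" if \<delta>: "\<delta> > 0" for x s \<delta>
  proof (cases "Q x s = 0")
    case True
    have "Ts (\<lambda>_. 0) = 0" unfolding Ts_def by simp
    then show ?thesis using True \<delta> by (intro exI[of _ "\<lambda>_. 0"]) simp
  next
    case False
    define q where "q = Q x s"
    have q: "q > 0" using False Q_nonneg[of x s] unfolding q_def by simp
    define \<alpha> where "\<alpha> = \<rho> / (2 * sqrt q)"
    have \<alpha>: "\<alpha> > 0" unfolding \<alpha>_def using \<rho> q by simp
    define \<phi> where "\<phi> t = q / max q (Q x t)" for t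
    define a where "a t = complex_of_real (\<alpha> * \<phi> t)" for t
    have cxa: "cx a"
      unfolding cx_def a_def \<phi>_def using q
      by (intro continuous_intros Q_cont) auto
    have \<phi>1: "\<phi> t \<le> 1" "0 \<le> \<phi> t" "\<phi> t * Q x t \<le> q" for t
      unfolding \<phi>_def using q Q_nonneg[of x t] by (auto simp: field_simps max_def)
    have as: "a s = complex_of_real \<alpha>" unfolding a_def \<phi>_def q_def using q unfolding q_def by simp
    have Qx': "Q (sm a x) t \<le> \<alpha>^2 * q" for t
    proof -
      have "Q (sm a x) t = (\<alpha> * \<phi> t)^2 * Q x t"
      proof -
        have ca: "cmod (a t) = \<alpha> * \<phi> t" unfolding a_def norm_of_real using \<alpha> \<phi>1(2)[of t] by simp
        show ?thesis using Q_sm[OF cxa, of x t] unfolding ca .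
      qed
      also have "\<dots> = \<alpha>^2 * (\<phi> t * (\<phi> t * Q x t))" by (simp add: power2_eq_square algebra_simps)
      also have "\<dots> \<le> \<alpha>^2 * (1 * q)"
        using \<phi>1[of t] Q_nonneg[of x t] q by (intro mult_left_mono mult_mono) auto
      finally show ?thesis by simp
    qed
    have "nrm (sm a x) \<le> \<rho> / 2"
    proof (rule nrm_le)
      fix t
      have "sqrt (Q (sm a x) t) \<le> sqrt (\<alpha>^2 * q)" using Qx' by simp
      also have "\<dots> = \<alpha> * sqrt q" using \<alpha> by (simp add: real_sqrt_mult)
      also have "\<dots> = \<rho> / 2" unfolding \<alpha>_def using q by simp
      finally show "sqrt (Q (sm a x) t) \<le> \<rho> / 2" .
    qed
    then have nx: "nrm (sm a x) < \<rho>" using \<rho> by simp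
    have \<epsilon>: "\<alpha> * sqrt \<delta> > 0" using \<alpha> \<delta> by simp
    from A[rule_format, OF nx \<epsilon>] obtain c where c: "c \<in> Bk r" "nrm (sm a x - Tf c) < \<alpha> * sqrt \<delta>"
      by blast
    have "Q (sm a x - Tf c) s \<le> (nrm (sm a x - Tf c))^2" by (rule Q_le_nrm)
    also have "\<dots> < (\<alpha> * sqrt \<delta>)^2" using c(2) nrm_nonneg by (intro power_strict_mono) auto
    also have "\<dots> = \<alpha>^2 * \<delta>" using \<delta> by (simp add: power_mult_distrib)
    finally have lt: "Q (sm a x - Tf c) s < \<alpha>^2 * \<delta>" .
    define v where "v g = c g s / complex_of_real \<alpha>" for g
    have av: "complex_of_real \<alpha> * v g = c g s" for g unfolding v_def using \<alpha> by simp
    have "Q (sm a x - Tf c) s = Q (sc (complex_of_real \<alpha>) (x - Ts v)) s"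
    proof (rule Q_eqI)
      fix z
      have "ip (sm a x - Tf c) z s = complex_of_real \<alpha> * ip x z s - (\<Sum>g\<in>G. c g s * ip g z s)"
        by (simp add: ip_diff_left ip_sm[OF cxa] as Tf_ip[OF c(1)])
      also have "(\<Sum>g\<in>G. c g s * ip g z s) = complex_of_real \<alpha> * (\<Sum>g\<in>G. v g * ip g z s)"
        by (simp add: sum_distrib_left mult.assoc[symmetric] av)
      also have "complex_of_real \<alpha> * ip x z s - complex_of_real \<alpha> * (\<Sum>g\<in>G. v g * ip g z s)
          = ip (sc (complex_of_real \<alpha>) (x - Ts v)) z s"
        by (simp add: ip_sc ip_diff_left Ts_ip right_diff_distrib)
      finally show "ip (sm a x - Tf c) z s = ip (sc (complex_of_real \<alpha>) (x - Ts v)) z s" .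
    qed
    also have "\<dots> = \<alpha>^2 * Q (x - Ts v) s" using \<alpha> by (simp add: Q_sc)
    finally have "\<alpha>^2 * Q (x - Ts v) s < \<alpha>^2 * \<delta>" using lt by simp
    then have Qlt: "Q (x - Ts v) s < \<delta>" using \<alpha> by simp
    have "cmod (v g) \<le> K * sqrt (Q x s)" if g: "g \<in> G" for g
    proof -
      have "cmod (c g s) \<le> r" using c(1) g unfolding Bk_def by blast
      then have "cmod (v g) \<le> r / \<alpha>" unfolding v_def using \<alpha> by (simp add: norm_divide divide_right_mono)
      also have "r / \<alpha> = K * sqrt (Q x s)" unfolding K_def \<alpha>_def q_def using \<rho> q unfolding q_def by (simp add: field_simps)
      finally show ?thesis .
    qed
    then show ?thesis using Qlt by blast
  qed
  then show ?thesis using K0 by blast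
qed

end

context hmgc begin

definition bN :: "nat set \<Rightarrow> (nat \<Rightarrow> 'h) \<Rightarrow> nat \<Rightarrow> 'x \<Rightarrow> 'h \<Rightarrow> 'h \<Rightarrow> complex" where
  "bN J y N s u v = ip u v s - (\<Sum>j\<in>J \<inter> {..<N}. ip u (y j) s * ip (y j) v s)"

definition BN :: "nat set \<Rightarrow> (nat \<Rightarrow> 'h) \<Rightarrow> nat \<Rightarrow> 'x \<Rightarrow> 'h \<Rightarrow> real" where
  "BN J y N s u = Q u s - (\<Sum>j\<in>J \<inter> {..<N}. (cmod (ip u (y j) s))^2)"

lemma ip_mult_cnj: "ip u w s * ip w u s = complex_of_real ((cmod (ip u w s))^2)"
  using complex_norm_square[of "ip u w s"] ip_sym[of w u s] by simp

lemma bN_self: "bN J y N s u u = complex_of_real (BN J y N s u)"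
  unfolding bN_def BN_def by (simp add: ip_mult_cnj ip_self)

lemma partial_le:
  assumes fr: "std_nt_frame ip J y"
  shows "(\<Sum>j\<in>J \<inter> {..<N}. (cmod (ip u (y j) s))^2) \<le> Q u s"
proof -
  define t where "t j = (if j \<in> J then (cmod (ip u (y j) s))^2 else 0)" for j
  have "(\<lambda>j. if j \<in> J then ip u (y j) s * ip (y j) u s else 0) sums ip u u s"
    by (rule frame_pointwise[OF fr])
  then have "(\<lambda>j. Re (if j \<in> J then ip u (y j) s * ip (y j) u s else 0)) sums Re (ip u u s)"
    by (rule sums_Re)
  moreover have "(\<lambda>j. Re (if j \<in> J then ip u (y j) s * ip (y j) u s else 0)) = t"
    unfolding t_def by (auto simp: ip_mult_cnj)
  ultimately have ts: "t sums Q u s" unfolding Q_def by simp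
  have "sum t {..<N} \<le> suminf t"
    by (rule sum_le_suminf) (use ts in \<open>auto simp: sums_summable t_def\<close>)
  also have "suminf t = Q u s" using ts by (simp add: sums_unique[symmetric])
  also have "sum t {..<N} = (\<Sum>j\<in>J \<inter> {..<N}. (cmod (ip u (y j) s))^2)"
    unfolding t_def by (simp add: sum.inter_restrict[symmetric] Int_commute)
  finally show ?thesis .
qed

lemma BN_nonneg: "std_nt_frame ip J y \<Longrightarrow> 0 \<le> BN J y N s u"
  unfolding BN_def using partial_le by simp

lemma BN_le_Q: "BN J y N s u \<le> Q u s"
  unfolding BN_def by (simp add: sum_nonneg)

lemma BN_triangle:
  assumes fr: "std_nt_frame ip J y"
  shows "sqrt (BN J y N s (x + z)) \<le> sqrt (BN J y N s x) + sqrt (BN J y N s z)"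
proof -
  have "sqrt (Re (bN J y N s (x + z) (x + z))) \<le> sqrt (Re (bN J y N s x x)) + sqrt (Re (bN J y N s z z))"
  proof (rule form_triangle[where b="bN J y N s"])
    show "bN J y N s (u + v) w = bN J y N s u w + bN J y N s v w" for u v w
      unfolding bN_def by (simp add: ip_add distrib_right sum.distrib)
    show "bN J y N s (sc a u) w = a * bN J y N s u w" for a u w
      unfolding bN_def by (simp add: ip_sc right_diff_distrib sum_distrib_left mult.assoc)
    show "bN J y N s u w = cnj (bN J y N s w u)" for u w
      unfolding bN_def by (simp add: ip_sym[of u w s] ip_sym[of u "y j" s for j] ip_sym[of "y j" w s for j] mult.commute)
    show "0 \<le> Re (bN J y N s u u)" for u
      using BN_nonneg[OF fr] by (simp add: bN_self)
  qed
  then show ?thesis by (simp add: bN_self)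
qed

lemma BN_sc: "BN J y N s (sc a u) = (cmod a)^2 * BN J y N s u"
  unfolding BN_def by (simp add: Q_sc ip_sc norm_mult power_mult_distrib sum_distrib_left right_diff_distrib)

lemma BN_zero: "BN J y N s 0 = 0"
  unfolding BN_def Q_def by simp

lemma BN_sum:
  assumes fr: "std_nt_frame ip J y" and fin: "finite F"
  shows "sqrt (BN J y N s (\<Sum>g\<in>F. sc (v g) g)) \<le> (\<Sum>g\<in>F. cmod (v g) * sqrt (BN J y N s g))"
  using fin
proof (induction F rule: finite_induct)
  case empty
  then show ?case by (simp add: BN_zero)
next
  case (insert g F)
  have "sqrt (BN J y N s (\<Sum>g\<in>insert g F. sc (v g) g)) = sqrt (BN J y N s (sc (v g) g + (\<Sum>g\<in>F. sc (v g) g)))"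
    using insert by simp
  also have "\<dots> \<le> sqrt (BN J y N s (sc (v g) g)) + sqrt (BN J y N s (\<Sum>g\<in>F. sc (v g) g))"
    by (rule BN_triangle[OF fr])
  also have "sqrt (BN J y N s (sc (v g) g)) = cmod (v g) * sqrt (BN J y N s g)"
    by (simp add: BN_sc real_sqrt_mult)
  also have "\<dots> + sqrt (BN J y N s (\<Sum>g\<in>F. sc (v g) g)) \<le> cmod (v g) * sqrt (BN J y N s g) + (\<Sum>g\<in>F. cmod (v g) * sqrt (BN J y N s g))"
    using insert.IH by simp
  finally show ?case using insert by simp
qed


lemma BN_ON_bound:
  assumes fr: "std_nt_frame ip J y" and K: "K \<ge> 0"
    and LA: "\<forall>x s \<delta>. \<delta> > 0 \<longrightarrow> (\<exists>v. Q (x - Ts v) s < \<delta> \<and> (\<forall>g\<in>G. cmod (v g) \<le> K * sqrt (Q x s)))"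
    and u: "Q u s = 1"
  shows "sqrt (BN J y N s u) \<le> K * (\<Sum>g\<in>G. sqrt (BN J y N s g))"
proof (rule field_le_epsilon)
  fix e :: real assume e: "e > 0"
  then have "e^2 > 0" by simp
  from LA[rule_format, of "e^2" u s, OF this] obtain v where v: "Q (u - Ts v) s < e^2" "\<forall>g\<in>G. cmod (v g) \<le> K * sqrt (Q u s)" by blast
  have uv: "Ts v + (u - Ts v) = u" by simp
  have "sqrt (BN J y N s u) \<le> sqrt (BN J y N s (Ts v)) + sqrt (BN J y N s (u - Ts v))"
    using BN_triangle[OF fr, of N s "Ts v" "u - Ts v"] unfolding uv .
  also have "sqrt (BN J y N s (Ts v)) \<le> (\<Sum>g\<in>G. cmod (v g) * sqrt (BN J y N s g))"
    unfolding Ts_def by (rule BN_sum[OF fr finG])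
  also have "\<dots> \<le> (\<Sum>g\<in>G. K * sqrt (BN J y N s g))"
    using v(2) u BN_nonneg[OF fr] by (intro sum_mono mult_right_mono) auto
  also have "\<dots> = K * (\<Sum>g\<in>G. sqrt (BN J y N s g))" by (simp add: sum_distrib_left)
  also have "sqrt (BN J y N s (u - Ts v)) \<le> sqrt (Q (u - Ts v) s)" using BN_le_Q by simp
  also have "\<dots> < sqrt (e^2)" using v(1) by (rule real_sqrt_less_mono)
  also have "\<dots> = e" using e by simp
  finally show "sqrt (BN J y N s u) \<le> K * (\<Sum>g\<in>G. sqrt (BN J y N s g)) + e" by simp
qed

lemma dm_minus_P:
  assumes on: "ON s e (dm s)"
  shows "of_nat (dm s) - (\<Sum>j\<in>J \<inter> {..<N}. ip (y j) (y j) s) = complex_of_real (\<Sum>i<dm s. BN J y N s (e i))"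
proof -
  have "complex_of_real (\<Sum>i<dm s. BN J y N s (e i)) = (\<Sum>i<dm s. bN J y N s (e i) (e i))"
    by (simp add: bN_self)
  also have "\<dots> = (\<Sum>i<dm s. ip (e i) (e i) s) - (\<Sum>i<dm s. \<Sum>j\<in>J \<inter> {..<N}. ip (e i) (y j) s * ip (y j) (e i) s)"
    unfolding bN_def by (simp add: sum_subtractf)
  also have "(\<Sum>i<dm s. ip (e i) (e i) s) = of_nat (dm s)" using on unfolding ON_def by simp
  also have "(\<Sum>i<dm s. \<Sum>j\<in>J \<inter> {..<N}. ip (e i) (y j) s * ip (y j) (e i) s)
      = (\<Sum>j\<in>J \<inter> {..<N}. \<Sum>i<dm s. ip (y j) (e i) s * ip (e i) (y j) s)"
    by (subst sum.swap) (simp add: mult.commute)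
  also have "\<dots> = (\<Sum>j\<in>J \<inter> {..<N}. ip (y j) (y j) s)"
    by (intro sum.cong refl) (rule parseval[OF on, symmetric])
  finally show ?thesis by simp
qed

lemma frame_unif:
  assumes fr: "std_nt_frame ip J y"
  shows "uniform_limit UNIV (\<lambda>N s. \<Sum>j\<in>J \<inter> {..<N}. ip (y j) (y j) s) (\<lambda>s. of_nat (dm s)) sequentially"
  unfolding uniform_limit_iff
proof (intro allI impI)
  fix \<epsilon> :: real assume \<epsilon>: "\<epsilon> > 0"
  from local_approx obtain K where K: "K \<ge> 0"
    and LA: "\<forall>x s \<delta>. \<delta> > 0 \<longrightarrow> (\<exists>v. Q (x - Ts v) s < \<delta> \<and> (\<forall>g\<in>G. cmod (v g) \<le> K * sqrt (Q x s)))"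
    by blast
  define n where "n = card G"
  define \<eta> where "\<eta> = \<epsilon> / (2 * (1 + real n ^ 3 * K^2))"
  have den: "2 * (1 + real n ^ 3 * K^2) > 0" by (simp add: add_pos_nonneg)
  have \<eta>: "\<eta> > 0" unfolding \<eta>_def using \<epsilon> den by simp
  have \<eta>\<epsilon>: "real n ^ 3 * K^2 * \<eta> < \<epsilon>"
  proof -
    have "real n ^ 3 * K^2 * \<eta> \<le> (1 + real n ^ 3 * K^2) * \<eta>" using \<eta> by simp
    also have "\<dots> = \<epsilon> / 2" unfolding \<eta>_def using den by (simp add: field_simps)
    finally show ?thesis using \<epsilon> by simp
  qed
  have ev: "\<forall>\<^sub>F N in sequentially. \<forall>g\<in>G. \<forall>s. BN J y N s g < \<eta>"
  proof (rule eventually_ball_finite[OF finG], rule ballI)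
    fix g assume "g \<in> G"
    have "uniform_limit UNIV (\<lambda>N t. \<Sum>j\<in>J \<inter> {..<N}. ip g (y j) t * ip (y j) g t) (ip g g) sequentially"
      using fr unfolding std_nt_frame_def by blast
    then have "\<forall>\<^sub>F N in sequentially. \<forall>s\<in>UNIV. dist (\<Sum>j\<in>J \<inter> {..<N}. ip g (y j) s * ip (y j) g s) (ip g g s) < \<eta>"
      unfolding uniform_limit_iff using \<eta> by blast
    then show "\<forall>\<^sub>F N in sequentially. \<forall>s. BN J y N s g < \<eta>"
    proof (rule eventually_mono)
      fix N assume H: "\<forall>s\<in>UNIV. dist (\<Sum>j\<in>J \<inter> {..<N}. ip g (y j) s * ip (y j) g s) (ip g g s) < \<eta>"
      show "\<forall>s. BN J y N s g < \<eta>"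
      proof
        fix s
        have "BN J y N s g = Re (ip g g s - (\<Sum>j\<in>J \<inter> {..<N}. ip g (y j) s * ip (y j) g s))"
          unfolding BN_def Q_def by (simp add: ip_mult_cnj)
        also have "\<dots> \<le> cmod (ip g g s - (\<Sum>j\<in>J \<inter> {..<N}. ip g (y j) s * ip (y j) g s))"
          by (rule complex_Re_le_cmod)
        also have "\<dots> = dist (\<Sum>j\<in>J \<inter> {..<N}. ip g (y j) s * ip (y j) g s) (ip g g s)"
          by (simp add: dist_norm norm_minus_commute)
        also have "\<dots> < \<eta>" using H by blast
        finally show "BN J y N s g < \<eta>" .
      qed
    qed
  qed
  show "\<forall>\<^sub>F N in sequentially. \<forall>s\<in>UNIV. dist (\<Sum>j\<in>J \<inter> {..<N}. ip (y j) (y j) s) (of_nat (dm s)) < \<epsilon>"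
    using ev
  proof (rule eventually_mono)
    fix N assume H: "\<forall>g\<in>G. \<forall>s. BN J y N s g < \<eta>"
    show "\<forall>s\<in>UNIV. dist (\<Sum>j\<in>J \<inter> {..<N}. ip (y j) (y j) s) (of_nat (dm s)) < \<epsilon>"
    proof
      fix s :: 'x
      obtain e where on: "ON s e (dm s)" using dm_ex by blast
      have R: "(\<Sum>g\<in>G. sqrt (BN J y N s g)) \<le> real n * sqrt \<eta>"
      proof -
        have "(\<Sum>g\<in>G. sqrt (BN J y N s g)) \<le> (\<Sum>g\<in>G. sqrt \<eta>)"
          using H by (intro sum_mono) (simp add: less_imp_le)
        then show ?thesis unfolding n_def by simp
      qed
      have bi: "BN J y N s (e i) \<le> K^2 * real n^2 * \<eta>" if i: "i < dm s" for i
      proof -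
        have Q1: "Q (e i) s = 1" using on i unfolding ON_def Q_def by simp
        have "sqrt (BN J y N s (e i)) \<le> K * (\<Sum>g\<in>G. sqrt (BN J y N s g))"
          by (rule BN_ON_bound[OF fr K LA Q1])
        also have "\<dots> \<le> K * (real n * sqrt \<eta>)" using R K by (rule mult_left_mono)
        finally have "sqrt (BN J y N s (e i)) \<le> K * (real n * sqrt \<eta>)" .
        then have "(sqrt (BN J y N s (e i)))^2 \<le> (K * (real n * sqrt \<eta>))^2"
          using BN_nonneg[OF fr] by (intro power_mono) auto
        then show ?thesis using BN_nonneg[OF fr] \<eta> by (simp add: power_mult_distrib)
      qed
      have "dist (\<Sum>j\<in>J \<inter> {..<N}. ip (y j) (y j) s) (of_nat (dm s)) = cmod (of_nat (dm s) - (\<Sum>j\<in>J \<inter> {..<N}. ip (y j) (y j) s))"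
        by (simp add: dist_norm norm_minus_commute)
      also have "\<dots> = \<bar>\<Sum>i<dm s. BN J y N s (e i)\<bar>" unfolding dm_minus_P[OF on] norm_of_real ..
      also have "\<dots> = (\<Sum>i<dm s. BN J y N s (e i))" using BN_nonneg[OF fr] by (simp add: sum_nonneg)
      also have "\<dots> \<le> (\<Sum>i<dm s. K^2 * real n^2 * \<eta>)" using bi by (intro sum_mono) simp
      also have "\<dots> = real (dm s) * (K^2 * real n^2 * \<eta>)" by simp
      also have "\<dots> \<le> real n * (K^2 * real n^2 * \<eta>)"
        using dm_le[of s] \<eta> unfolding n_def by (intro mult_right_mono) auto
      also have "\<dots> = real n ^ 3 * K^2 * \<eta>" by (simp add: power3_eq_cube power2_eq_square)
      also have "\<dots> < \<epsilon>" by (rule \<eta>\<epsilon>)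
      finally show "dist (\<Sum>j\<in>J \<inter> {..<N}. ip (y j) (y j) s) (of_nat (dm s)) < \<epsilon>" .
    qed
  qed
qed

lemma dm_continuous:
  assumes fr: "std_nt_frame ip J y"
  shows "continuous_on UNIV (\<lambda>s. complex_of_nat (dm s))"
proof (rule uniform_limit_theorem[OF _ frame_unif[OF fr]])
  show "\<forall>\<^sub>F N in sequentially. continuous_on UNIV (\<lambda>s. \<Sum>j\<in>J \<inter> {..<N}. ip (y j) (y j) s)"
    using ip_cx unfolding cx_def by (intro always_eventually allI continuous_on_sum) auto
qed simp

end

theorem proposition4p7:
  fixes sm :: "('x::t2_space \<Rightarrow> complex) \<Rightarrow> 'h::ab_group_add \<Rightarrow> 'h"
    and ip :: "'h \<Rightarrow> 'h \<Rightarrow> ('x \<Rightarrow> complex)"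
  assumes "compact (UNIV :: 'x set)"
    and "hilbert_CX_module sm ip"
    and "finitely_generated_CX sm"
  shows "\<exists>f :: 'x \<Rightarrow> complex.
           continuous_on UNIV f \<and>
           (\<forall>t. f t \<in> \<nat>) \<and>
           (\<forall>k::nat. open {t. f t = of_nat k} \<and> closed {t. f t = of_nat k}) \<and>
           (\<forall>J y. std_nt_frame ip J y \<longrightarrow>
              (\<forall>t. (\<lambda>j. if j \<in> J then ip (y j) (y j) t else 0) sums f t))"
proof -
  obtain G where G: "finite G" "\<forall>x. \<exists>c. (\<forall>g\<in>G. cx (c g)) \<and> x = (\<Sum>g\<in>G. sm (c g) g)"
    using assms(3) unfolding finitely_generated_CX_def by blast
  interpret hmgc sm ip G
    by unfold_locales (use assms G in auto)
  define f where "f = (if (\<exists>J y. std_nt_frame ip J y) then (\<lambda>s. complex_of_nat (dm s)) else (\<lambda>_. 0))"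
  have fN: "\<exists>m. f t = of_nat m" for t unfolding f_def by auto
  have cont: "continuous_on UNIV f"
  proof (cases "\<exists>J y. std_nt_frame ip J y")
    case True
    then obtain J y where "std_nt_frame ip J y" by blast
    then show ?thesis using True unfolding f_def by (simp add: dm_continuous)
  next
    case False
    then have "f = (\<lambda>_. 0)" unfolding f_def by (rule if_not_P)
    then show ?thesis by simp
  qed
  have clopen: "open {t. f t = of_nat k} \<and> closed {t. f t = of_nat k}" for k :: nat
  proof
    show "closed {t. f t = of_nat k}"
      by (rule closed_Collect_eq[OF cont]) simp
    have "{t. f t = of_nat k} = {t. dist (f t) (of_nat k) < 1/2}"
    proof (intro Collect_cong iffI)
      fix t
      assume "dist (f t) (of_nat k) < 1/2"
      moreover obtain m where m: "f t = of_nat m" using fN by blast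
      ultimately have "\<bar>real m - real k\<bar> < 1/2"
        by (simp add: dist_norm) (metis of_real_diff of_real_of_nat_eq norm_of_real)
      then have "m = k" by linarith
      then show "f t = of_nat k" using m by simp
    qed simp
    also have "open \<dots>"
      by (rule open_Collect_less) (intro continuous_intros cont)+
    finally show "open {t. f t = of_nat k}" .
  qed
  have sums: "\<forall>J y. std_nt_frame ip J y \<longrightarrow> (\<forall>t. (\<lambda>j. if j \<in> J then ip (y j) (y j) t else 0) sums f t)"
  proof (intro allI impI)
    fix J y t assume fr: "std_nt_frame ip J y"
    then have "f = (\<lambda>s. complex_of_nat (dm s))" unfolding f_def by auto
    then show "(\<lambda>j. if j \<in> J then ip (y j) (y j) t else 0) sums f t" using frame_sums[OF fr] by simp
  qed
  have fNat: "\<forall>t. f t \<in> \<nat>"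
  proof
    fix t obtain m where "f t = of_nat m" using fN by blast
    then show "f t \<in> \<nat>" by (simp add: of_nat_in_Nats)
  qed
  show ?thesis
    using cont clopen sums fNat by blast
qed

end
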